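(* Let $n\geq 4$, let $S$ be the set of all $3$-cycles in $S_n$, and let $CAG_n=\mathrm{Cay}(A_n,S)$. Then $$\mathrm{Aut}(CAG_n)\supseteq (R(A_n)\rtimes \mathrm{Inn}(S_n))\rtimes \mathbb{Z}_2\cong (A_n\rtimes S_n)\rtimes \mathbb{Z}_2,$$ where $R(A_n)$ is the right regular representation of $A_n$, $\mathrm{Inn}(S_n)$ is the inner automorphism group of $S_n$ (acting on $A_n$ by conjugation), and $\mathbb{Z}_2=\langle h\rangle$ with $h$ the map $\alpha\mapsto\alpha^{-1}$ for all $\alpha\in A_n$.
   Context: For a finite group $\Gamma$ and a subset $T\subseteq\Gamma$ with $e\notin T$ and $T=T^{-1}$, the Cayley graph $\mathrm{Cay}(\Gamma,T)$ is the undirected graph with vertex set $\Gamma$ and edge set $\{\{\gamma,t\gamma\}\mid \gamma\in\Gamma, t\in T\}$. The right regular representation is $R(\Gamma)=\{r_\gamma: x\mapsto x\gamma\mid\gamma\in\Gamma\}$. *)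

theory Defs
  imports "HOL-Algebra.Algebra"
begin

definition cay_edges :: "('a, 'c) monoid_scheme \<Rightarrow> 'a set \<Rightarrow> 'a set set" where
  "cay_edges G T = {{g, t \<otimes>\<^bsub>G\<^esub> g} | g t. g \<in> carrier G \<and> t \<in> T}"

definition cay_auts :: "('a, 'c) monoid_scheme \<Rightarrow> 'a set \<Rightarrow> ('a \<Rightarrow> 'a) set" where
  "cay_auts G T = {f \<in> Bij (carrier G). \<forall>x \<in> carrier G. \<forall>y \<in> carrier G.
      ({x, y} \<in> cay_edges G T \<longleftrightarrow> {f x, f y} \<in> cay_edges G T)}"

definition cay_aut_group :: "('a, 'c) monoid_scheme \<Rightarrow> 'a set \<Rightarrow> ('a \<Rightarrow> 'a) monoid" where
  "cay_aut_group G T = (BijGroup (carrier G)) \<lparr>carrier := cay_auts G T\<rparr>"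

definition semidirect :: "('a, 'c) monoid_scheme \<Rightarrow> ('b, 'd) monoid_scheme \<Rightarrow> ('b \<Rightarrow> 'a \<Rightarrow> 'a)
    \<Rightarrow> ('a \<times> 'b) monoid" where
  "semidirect N H phi = \<lparr> carrier = carrier N \<times> carrier H,
     monoid.mult = (\<lambda>(n1, h1) (n2, h2). (n1 \<otimes>\<^bsub>N\<^esub> phi h1 n2, h1 \<otimes>\<^bsub>H\<^esub> h2)),
     one = (\<one>\<^bsub>N\<^esub>, \<one>\<^bsub>H\<^esub>) \<rparr>"

end

theory Submission
  imports Defs
begin


abbreviation "Cn n \<equiv> carrier (alt_group n)"
abbreviation "Sn n \<equiv> carrier (sym_group n)"

lemma Cn_iff: "x \<in> Cn n \<longleftrightarrow> x permutes {1..n} \<and> evenperm x"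
  by (simp add: alt_group_carrier)
lemma Sn_iff: "x \<in> Sn n \<longleftrightarrow> x permutes {1..n}"
  by (simp add: sym_group_carrier)

lemma Cn_bij: "x \<in> Cn n \<Longrightarrow> bij x"
  by (auto simp: Cn_iff dest: permutes_bij)
lemma Sn_bij: "x \<in> Sn n \<Longrightarrow> bij x"
  by (auto simp: Sn_iff dest: permutes_bij)
lemma Cn_Sn: "x \<in> Cn n \<Longrightarrow> x \<in> Sn n"
  by (simp add: Cn_iff Sn_iff)

lemma Cn_comp: "x \<in> Cn n \<Longrightarrow> y \<in> Cn n \<Longrightarrow> x \<circ> y \<in> Cn n"
  unfolding Cn_iff
  by (metis evenperm_comp permutation_permutes permutes_compose finite_atLeastAtMost)
lemma Cn_inv: "x \<in> Cn n \<Longrightarrow> inv' x \<in> Cn n"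
  by (rule alt_group_inv_closed)
lemma Sn_comp: "x \<in> Sn n \<Longrightarrow> y \<in> Sn n \<Longrightarrow> x \<circ> y \<in> Sn n"
  unfolding Sn_iff by (simp add: permutes_compose)
lemma Sn_inv: "x \<in> Sn n \<Longrightarrow> inv' x \<in> Sn n"
  by (rule sym_group_inv_closed)
lemma Cn_conj: "s \<in> Sn n \<Longrightarrow> x \<in> Cn n \<Longrightarrow> s \<circ> x \<circ> inv' s \<in> Cn n"
proof -
  assume s: "s \<in> Sn n" and x: "x \<in> Cn n"
  have ps0: "permutation s" "permutation x"
    using s x by (auto simp: Sn_iff Cn_iff permutation_permutes)
  have ps: "permutation s" "permutation x" "permutation (inv' s)"
    using ps0 permutation_inverse by auto
  have "evenperm (s \<circ> x \<circ> inv' s)"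
    using ps x by (simp add: evenperm_comp permutation_compose evenperm_inv Cn_iff)
  moreover have "(s \<circ> x \<circ> inv' s) permutes {1..n}"
    using s x by (simp add: Sn_iff Cn_iff permutes_compose permutes_inv)
  ultimately show ?thesis by (simp add: Cn_iff)
qed
lemma Cn_id: "id \<in> Cn n" by (simp add: Cn_iff permutes_id)
lemma Sn_id: "id \<in> Sn n" by (simp add: Sn_iff permutes_id)

lemma cancel3: "bij p \<Longrightarrow> p \<circ> inv' p = id"
  by (meson bij_betw_def surj_iff)
lemma cancel4: "bij p \<Longrightarrow> inv' p \<circ> p = id"
  by (simp add: bij_is_inj inv_o_cancel)
lemma cancel1: "bij p \<Longrightarrow> p \<circ> (inv' p \<circ> f) = f"
  by (metis cancel3 comp_assoc id_comp)
lemma cancel2: "bij p \<Longrightarrow> inv' p \<circ> (p \<circ> f) = f"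
  by (metis cancel4 comp_assoc id_comp)

lemmas permsimps = comp_assoc o_inv_distrib inv_inv_eq cancel1 cancel2 cancel3 cancel4
  bij_comp bij_imp_bij_inv

lemma alt_inv: "x \<in> Cn n \<Longrightarrow> inv\<^bsub>alt_group n\<^esub> x = inv' x"
proof -
  assume x: "x \<in> Cn n"
  have "inv' x \<otimes>\<^bsub>alt_group n\<^esub> x = \<one>\<^bsub>alt_group n\<^esub>"
    using x by (simp add: alt_group_mult alt_group_one cancel4 Cn_bij)
  thus ?thesis using group.inv_equality[OF alt_group_is_group] x Cn_inv by metis
qed

abbreviation "T3 n \<equiv> three_cycles n"

lemma T3_Cn: "t \<in> T3 n \<Longrightarrow> t \<in> Cn n"
  using three_cycles_incl by blast

lemma T3_conj: assumes s: "s \<in> Sn n" and t: "t \<in> T3 n" shows "s \<circ> t \<circ> inv' s \<in> T3 n"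
proof -
  obtain cs where cs: "t = cycle_of_list cs" "distinct cs" "length cs = 3" "set cs \<subseteq> {1..n}"
    using t by auto
  have sp: "s permutes {1..n}" using s by (simp add: Sn_iff)
  have "s \<circ> t \<circ> inv' s = cycle_of_list (map s cs)"
    using conjugation_of_cycle[OF cs(2) Sn_bij[OF s]] cs(1) by simp
  moreover have "distinct (map s cs)"
  proof -
    have "inj_on s (set cs)" using bij_is_inj[OF Sn_bij[OF s]] inj_on_subset by blast
    thus ?thesis using cs(2) by (simp add: distinct_map)
  qed
  moreover have "set (map s cs) \<subseteq> {1..n}"
    using cs(4) permutes_image[OF sp] by auto
  ultimately show ?thesis using cs(3)
    by (smt (verit, best) length_map mem_Collect_eq)
qed

lemma T3_inv: assumes t: "t \<in> T3 n" shows "inv' t \<in> T3 n"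
proof -
  obtain cs where cs: "t = cycle_of_list cs" "distinct cs" "length cs = 3" "set cs \<subseteq> {1..n}"
    using t by auto
  obtain a b c where abc: "cs = [a,b,c]" using stupid_lemma[OF cs(3)] by auto
  have e1: "cycle_of_list [a,b,c] \<circ> cycle_of_list [c,b,a] = id"
    using cs(2) abc by (auto simp: fun_eq_iff transpose_def)
  have e2: "cycle_of_list [c,b,a] \<circ> cycle_of_list [a,b,c] = id"
    using cs(2) abc by (auto simp: fun_eq_iff transpose_def)
  have "inv' t = cycle_of_list [c,b,a]"
    using inv_unique_comp[OF e1 e2] cs(1) abc by simp
  moreover have "cycle [c,b,a]" "length [c,b,a] = 3" "set [c,b,a] \<subseteq> {1..n}"
    using cs abc by auto
  ultimately show ?thesis by blast
qed

lemma adj: assumes x: "x \<in> Cn n" and y: "y \<in> Cn n"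
  shows "{x,y} \<in> cay_edges (alt_group n) (T3 n) \<longleftrightarrow> y \<circ> inv' x \<in> T3 n"
proof
  assume "{x,y} \<in> cay_edges (alt_group n) (T3 n)"
  then obtain g t where gt: "{x,y} = {g, t \<circ> g}" "g \<in> Cn n" "t \<in> T3 n"
    by (auto simp: cay_edges_def alt_group_mult)
  have bt: "bij t" using T3_Cn[OF gt(3)] Cn_bij by blast
  have bg: "bij g" using gt(2) Cn_bij by blast
  from gt(1) have "(x = g \<and> y = t \<circ> g) \<or> (x = t \<circ> g \<and> y = g)"
    by (auto simp: doubleton_eq_iff)
  thus "y \<circ> inv' x \<in> T3 n"
  proof
    assume "x = g \<and> y = t \<circ> g"
    thus ?thesis using bt bg gt(3) by (simp add: permsimps)
  next
    assume "x = t \<circ> g \<and> y = g"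
    thus ?thesis using bt bg T3_inv[OF gt(3)] by (simp add: permsimps)
  qed
next
  assume h: "y \<circ> inv' x \<in> T3 n"
  have "y \<circ> inv' x \<circ> x = y" using Cn_bij[OF x] by (simp add: permsimps)
  thus "{x,y} \<in> cay_edges (alt_group n) (T3 n)"
    unfolding cay_edges_def alt_group_mult using x h
    by (smt (verit, best) mem_Collect_eq)
qed




definition "SD n = semidirect (alt_group n) (sym_group n) (\<lambda>\<sigma> a. \<sigma> \<circ> a \<circ> inv' \<sigma>)"

lemma SD_carrier: "carrier (SD n) = Cn n \<times> Sn n"
  by (simp add: SD_def semidirect_def)
lemma SD_mult: "(a,s) \<otimes>\<^bsub>SD n\<^esub> (b,t) = (a \<circ> (s \<circ> b \<circ> inv' s), s \<circ> t)"
  by (simp add: SD_def semidirect_def alt_group_mult sym_group_mult)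
lemma SD_one: "\<one>\<^bsub>SD n\<^esub> = (id, id)"
  by (simp add: SD_def semidirect_def alt_group_one sym_group_one)

definition psi :: "nat \<Rightarrow> int \<Rightarrow> ((nat \<Rightarrow> nat) \<times> (nat \<Rightarrow> nat)) \<Rightarrow> ((nat \<Rightarrow> nat) \<times> (nat \<Rightarrow> nat))"
  where "psi n k = (if k = 0 then (\<lambda>q\<in>carrier (SD n). q)
                    else (\<lambda>q\<in>carrier (SD n). (inv' (fst q), fst q \<circ> snd q)))"

definition "BSD n = semidirect (SD n) (integer_mod_group 2) (psi n)"

lemma Z2_carrier: "carrier (integer_mod_group 2) = {0,1}"
  by (auto simp: carrier_integer_mod_group)

lemma BSD_carrier: "carrier (BSD n) = (Cn n \<times> Sn n) \<times> {0,1}"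
  by (simp add: BSD_def semidirect_def SD_carrier Z2_carrier)
lemma BSD_mult: "(p,k) \<otimes>\<^bsub>BSD n\<^esub> (q,l) = (p \<otimes>\<^bsub>SD n\<^esub> psi n k q, (k + l) mod 2)"
  by (simp add: BSD_def semidirect_def)

definition Psi :: "nat \<Rightarrow> ((nat \<Rightarrow> nat) \<times> (nat \<Rightarrow> nat)) \<times> int \<Rightarrow> ((nat \<Rightarrow> nat) \<Rightarrow> (nat \<Rightarrow> nat))"
  where "Psi n P = (case P of ((a,s),k) \<Rightarrow>
     (\<lambda>x\<in>Cn n. s \<circ> (if k = 0 then x else inv' x) \<circ> inv' s \<circ> inv' a))"

lemma Psi_app: "x \<in> Cn n \<Longrightarrow> Psi n ((a,s),k) x = s \<circ> (if k = 0 then x else inv' x) \<circ> inv' s \<circ> inv' a"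
  by (simp add: Psi_def)
lemma Psi_out: "x \<notin> Cn n \<Longrightarrow> Psi n P x = undefined"
  by (simp add: Psi_def split: prod.splits)

lemma Psi_in: "a \<in> Cn n \<Longrightarrow> s \<in> Sn n \<Longrightarrow> x \<in> Cn n \<Longrightarrow> Psi n ((a,s),k) x \<in> Cn n"
  by (simp add: Psi_app Cn_comp Cn_conj Cn_inv comp_assoc[symmetric])

lemma BSD_closed:
  assumes "P \<in> carrier (BSD n)" "Q \<in> carrier (BSD n)"
  shows "P \<otimes>\<^bsub>BSD n\<^esub> Q \<in> carrier (BSD n)"
proof -
  obtain a s k b t l where P: "P = ((a,s),k)" and Q: "Q = ((b,t),l)"
    by (metis prod.exhaust)
  have h: "a \<in> Cn n" "s \<in> Sn n" "b \<in> Cn n" "t \<in> Sn n" "k \<in> {0,1}" "l \<in> {0,1}"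
    using assms P Q by (auto simp: BSD_carrier)
  have "a \<circ> t \<in> Sn n" using h Cn_Sn Sn_comp by blast
  moreover have "a \<circ> s \<circ> b \<circ> inv' s \<in> Cn n"
    using Cn_comp[OF h(1) Cn_conj[OF h(2) h(3)]] by (simp add: comp_assoc)
  moreover have "a \<circ> s \<circ> inv' b \<circ> inv' s \<in> Cn n"
    using Cn_comp[OF h(1) Cn_conj[OF h(2) Cn_inv[OF h(3)]]] by (simp add: comp_assoc)
  ultimately show ?thesis using h unfolding P Q BSD_mult
    by (auto simp: BSD_carrier psi_def SD_carrier SD_mult Cn_comp Cn_conj Cn_inv Sn_comp
        Cn_Sn comp_assoc[symmetric])
qed

lemma Psi_mult:
  assumes "P \<in> carrier (BSD n)" "Q \<in> carrier (BSD n)"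
  shows "Psi n (P \<otimes>\<^bsub>BSD n\<^esub> Q) = compose (Cn n) (Psi n P) (Psi n Q)"
proof -
  obtain a s k b t l where P: "P = ((a,s),k)" and Q: "Q = ((b,t),l)"
    by (metis prod.exhaust)
  have h: "a \<in> Cn n" "s \<in> Sn n" "b \<in> Cn n" "t \<in> Sn n" "k \<in> {0,1}" "l \<in> {0,1}"
    using assms P Q by (auto simp: BSD_carrier)
  have bj: "bij a" "bij s" "bij b" "bij t" using h Cn_bij Sn_bij by auto
  show ?thesis
  proof
    fix x
    show "Psi n (P \<otimes>\<^bsub>BSD n\<^esub> Q) x = compose (Cn n) (Psi n P) (Psi n Q) x"
    proof (cases "x \<in> Cn n")
      case False thus ?thesis by (simp add: Psi_out compose_def)
    next
      case True
      have bx: "bij x" using True Cn_bij by auto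
      have PQ: "Psi n Q x \<in> Cn n" using Psi_in h True Q by simp
      show ?thesis using h bj bx True PQ unfolding P Q BSD_mult compose_def
        by (auto simp: psi_def SD_carrier SD_mult Psi_app permsimps)
    qed
  qed
qed




lemma finite_Cn: "finite (Cn n)"
proof -
  have "Cn n \<subseteq> {p. p permutes {1..n}}" by (auto simp: Cn_iff)
  thus ?thesis using finite_permutations[of "{1..n}"] finite_subset by auto
qed

lemma Psi_Bij:
  assumes "P \<in> carrier (BSD n)"
  shows "Psi n P \<in> Bij (Cn n)"
proof -
  obtain a s k where P: "P = ((a,s),k)" by (metis prod.exhaust)
  have h: "a \<in> Cn n" "s \<in> Sn n" "k \<in> {0,1}" using assms P by (auto simp: BSD_carrier)
  have bj: "bij a" "bij s" using h Cn_bij Sn_bij by auto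
  have ext: "Psi n P \<in> extensional (Cn n)"
    using Psi_out by (auto simp: extensional_def)
  have sub: "Psi n P ` Cn n \<subseteq> Cn n" using Psi_in h P by auto
  have inj: "inj_on (Psi n P) (Cn n)"
  proof
    fix x y assume x: "x \<in> Cn n" and y: "y \<in> Cn n" and e: "Psi n P x = Psi n P y"
    have bx: "bij x" "bij y" using x y Cn_bij by auto
    let ?X = "if k = 0 then x else inv' x" and ?Y = "if k = 0 then y else inv' y"
    have "inv' s \<circ> Psi n P x \<circ> a \<circ> s = ?X"
      using x bj bx unfolding P by (simp add: Psi_app permsimps)
    moreover have "inv' s \<circ> Psi n P y \<circ> a \<circ> s = ?Y"
      using y bj bx unfolding P by (simp add: Psi_app permsimps)
    ultimately have "?X = ?Y" using e by simp
    thus "x = y" using bx by (metis inv_inv_eq)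
  qed
  have "bij_betw (Psi n P) (Cn n) (Cn n)"
    using endo_inj_surj[OF finite_Cn sub inj] inj by (simp add: bij_betw_def)
  thus ?thesis using ext by (simp add: Bij_def)
qed

lemma T3_conj_iff: assumes s: "s \<in> Sn n" and z: "bij z"
  shows "s \<circ> z \<circ> inv' s \<in> T3 n \<longleftrightarrow> z \<in> T3 n"
proof
  assume "s \<circ> z \<circ> inv' s \<in> T3 n"
  from T3_conj[OF Sn_inv[OF s] this] show "z \<in> T3 n"
    using Sn_bij[OF s] z by (simp add: permsimps)
qed (rule T3_conj[OF s])

lemma T3_inv_iff: assumes z: "bij z" shows "inv' z \<in> T3 n \<longleftrightarrow> z \<in> T3 n"
  using T3_inv[of "inv' z" n] T3_inv[of z n] z by (auto simp: inv_inv_eq)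

lemma Psi_aut:
  assumes "P \<in> carrier (BSD n)"
  shows "Psi n P \<in> cay_auts (alt_group n) (T3 n)"
proof -
  obtain a s k where P: "P = ((a,s),k)" by (metis prod.exhaust)
  have h: "a \<in> Cn n" "s \<in> Sn n" "k \<in> {0,1}" using assms P by (auto simp: BSD_carrier)
  have bj: "bij a" "bij s" using h Cn_bij Sn_bij by auto
  have "y \<circ> inv' x \<in> T3 n \<longleftrightarrow> Psi n P y \<circ> inv' (Psi n P x) \<in> T3 n"
    if x: "x \<in> Cn n" and y: "y \<in> Cn n" for x y
  proof -
    have bx: "bij x" "bij y" using x y Cn_bij by auto
    show ?thesis
    proof (cases "k = 0")
      case True
      have e: "Psi n P y \<circ> inv' (Psi n P x) = s \<circ> (y \<circ> inv' x) \<circ> inv' s"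
        using x y bj bx True unfolding P by (simp add: Psi_app permsimps)
      have bz: "bij (y \<circ> inv' x)" using bx by (simp add: bij_comp bij_imp_bij_inv)
      show ?thesis unfolding e using T3_conj_iff[OF h(2) bz] by blast
    next
      case False
      have sy: "s \<circ> inv' y \<in> Sn n" using Sn_comp[OF h(2) Sn_inv[OF Cn_Sn[OF y]]] .
      have e: "Psi n P y \<circ> inv' (Psi n P x) = (s \<circ> inv' y) \<circ> inv' (y \<circ> inv' x) \<circ> inv' (s \<circ> inv' y)"
        using x y bj bx False unfolding P by (simp add: Psi_app permsimps)
      have bz: "bij (y \<circ> inv' x)" using bx by (simp add: bij_comp bij_imp_bij_inv)
      hence bz': "bij (inv' (y \<circ> inv' x))" by (simp add: bij_imp_bij_inv)
      thus ?thesis unfolding e using T3_conj_iff[OF sy bz'] T3_inv_iff[OF bz, of n] by blast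
    qed
  qed
  note main = this
  have "\<forall>x\<in>Cn n. \<forall>y\<in>Cn n. ({x,y} \<in> cay_edges (alt_group n) (T3 n)
          \<longleftrightarrow> {Psi n P x, Psi n P y} \<in> cay_edges (alt_group n) (T3 n))"
  proof (intro ballI)
    fix x y assume x: "x \<in> Cn n" and y: "y \<in> Cn n"
    have fx: "Psi n P x \<in> Cn n" "Psi n P y \<in> Cn n" using Psi_in h P x y by auto
    show "{x,y} \<in> cay_edges (alt_group n) (T3 n)
          \<longleftrightarrow> {Psi n P x, Psi n P y} \<in> cay_edges (alt_group n) (T3 n)"
      using adj[OF x y] adj[OF fx] main[OF x y] by argo
  qed
  thus ?thesis using Psi_Bij[OF assms] unfolding cay_auts_def by blast
qed




lemma three_in: "distinct [a,b,c] \<Longrightarrow> {a,b,c} \<subseteq> {1..n} \<Longrightarrow> cycle_of_list [a,b,c] \<in> Cn n"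
proof -
  assume "distinct [a,b,c]" "{a,b,c} \<subseteq> {1..n}"
  hence "cycle_of_list [a,b,c] \<in> T3 n"
    unfolding mem_Collect_eq by (intro exI[of _ "[a,b,c]"]) simp
  thus ?thesis by (rule T3_Cn)
qed

lemma centralizer:
  assumes n: "n \<ge> 4" and r: "r \<in> Sn n" and c: "\<And>x. x \<in> Cn n \<Longrightarrow> r \<circ> x = x \<circ> r"
  shows "r = id"
proof (rule ccontr)
  assume "r \<noteq> id"
  then obtain i where ri: "r i \<noteq> i" by (auto simp: fun_eq_iff)
  have rp: "r permutes {1..n}" using r by (simp add: Sn_iff)
  have i: "i \<in> {1..n}" using ri rp by (meson permutes_not_in)
  define m where "m = r i"
  have m: "m \<in> {1..n}" using permutes_in_image[OF rp] i m_def by blast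
  have "card ({1..n} - {i,m}) \<ge> 2"
  proof -
    have "card {1..n} - card {i,m} \<le> card ({1..n} - {i,m})" by (rule diff_card_le_card_Diff) auto
    moreover have "card {i,m} \<le> 2" by (simp add: card_insert_if)
    ultimately show ?thesis using n by simp
  qed
  then obtain j where j: "j \<in> {1..n} - {i,m}"
    by (metis card.empty ex_in_conv not_numeral_le_zero)
  have "card ({1..n} - {i,m,j}) \<ge> 1"
  proof -
    have "card {1..n} - card {i,m,j} \<le> card ({1..n} - {i,m,j})" by (rule diff_card_le_card_Diff) auto
    moreover have "card {i,m,j} \<le> 3" by (simp add: card_insert_if)
    ultimately show ?thesis using n by simp
  qed
  then obtain k where k: "k \<in> {1..n} - {i,m,j}"
    by (metis card.empty ex_in_conv not_one_le_zero)
  have d: "distinct [m,j,k]" using j k ri m_def by auto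
  let ?c = "cycle_of_list [m,j,k]"
  have cC: "?c \<in> Cn n" using three_in[OF d] j k m by auto
  have ci: "?c i = i" using j k ri m_def by (simp add: transpose_def)
  have cm: "?c m = j" using d by (simp add: transpose_def)
  have "r (?c i) = ?c (r i)" using c[OF cC] by (metis comp_apply)
  hence "m = j" using ci cm m_def by simp
  thus False using j by simp
qed

lemma noncomm:
  assumes n: "n \<ge> 4"
  shows "\<exists>x y. x \<in> Cn n \<and> y \<in> Cn n \<and> x \<circ> y \<noteq> y \<circ> x"
proof -
  have x: "cycle_of_list [1,2,3] \<in> Cn n" using n by (intro three_in) auto
  have y: "cycle_of_list [1,2,4] \<in> Cn n" using n by (intro three_in) auto
  have "(cycle_of_list [1,2,3] \<circ> cycle_of_list [1,2,4]) (1::nat) = 3"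
    by (simp add: transpose_def)
  moreover have "(cycle_of_list [1,2,4] \<circ> cycle_of_list [1,2,3]) (1::nat) = 4"
    by (simp add: transpose_def)
  ultimately show ?thesis using x y by (metis numeral_eq_iff semiring_norm(89))
qed




lemma no_antiaut:
  assumes n: "n \<ge> 4" and s: "s \<in> Sn n" and t: "t \<in> Sn n"
    and e: "\<And>x. x \<in> Cn n \<Longrightarrow> s \<circ> x \<circ> inv' s = t \<circ> inv' x \<circ> inv' t"
  shows False
proof -
  obtain x y where xy: "x \<in> Cn n" "y \<in> Cn n" "x \<circ> y \<noteq> y \<circ> x" using noncomm[OF n] by blast
  have b: "bij s" "bij t" "bij x" "bij y" using s t xy Cn_bij Sn_bij by auto
  have "s \<circ> (x \<circ> y) \<circ> inv' s = (s \<circ> x \<circ> inv' s) \<circ> (s \<circ> y \<circ> inv' s)"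
    using b by (simp add: permsimps)
  also have "\<dots> = (t \<circ> inv' x \<circ> inv' t) \<circ> (t \<circ> inv' y \<circ> inv' t)" using e[OF xy(1)] e[OF xy(2)] by (simp only:)
  also have "\<dots> = t \<circ> inv' (y \<circ> x) \<circ> inv' t" using b by (simp add: permsimps)
  also have "\<dots> = s \<circ> (y \<circ> x) \<circ> inv' s" using e[OF Cn_comp[OF xy(2) xy(1)]] by (simp only:)
  finally have "s \<circ> (x \<circ> y) \<circ> inv' s = s \<circ> (y \<circ> x) \<circ> inv' s" .
  hence "inv' s \<circ> (s \<circ> (x \<circ> y) \<circ> inv' s) \<circ> s = inv' s \<circ> (s \<circ> (y \<circ> x) \<circ> inv' s) \<circ> s" by simp
  hence "x \<circ> y = y \<circ> x" using b by (simp add: permsimps)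
  thus False using xy by simp
qed

lemma Psi_id: "Psi n ((a,s),k) id = s \<circ> inv' s \<circ> inv' a"
  by (simp add: Psi_app Cn_id)

lemma Psi_inj:
  assumes n: "n \<ge> 4"
  shows "inj_on (Psi n) (carrier (BSD n))"
proof
  fix P Q assume P0: "P \<in> carrier (BSD n)" and Q0: "Q \<in> carrier (BSD n)" and e: "Psi n P = Psi n Q"
  obtain a s k b t l where P: "P = ((a,s),k)" and Q: "Q = ((b,t),l)"
    by (metis prod.exhaust)
  have h: "a \<in> Cn n" "s \<in> Sn n" "b \<in> Cn n" "t \<in> Sn n" "k \<in> {0,1}" "l \<in> {0,1}"
    using P0 Q0 P Q by (auto simp: BSD_carrier)
  have bj: "bij a" "bij s" "bij b" "bij t" using h Cn_bij Sn_bij by auto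
  have "inv' a = inv' b" using Psi_id[of n a s k] Psi_id[of n b t l] e bj unfolding P Q
    by (simp add: permsimps)
  hence ab: "a = b" using bj by (metis inv_inv_eq)
  have E: "s \<circ> (if k = 0 then x else inv' x) \<circ> inv' s = t \<circ> (if l = 0 then x else inv' x) \<circ> inv' t"
    if x: "x \<in> Cn n" for x
  proof -
    have "Psi n P x \<circ> a = Psi n Q x \<circ> a" using e by simp
    thus ?thesis using x bj ab unfolding P Q by (simp add: Psi_app permsimps)
  qed
  have kl: "k = l"
  proof (rule ccontr)
    assume "k \<noteq> l"
    hence "(k = 0 \<and> l = 1) \<or> (k = 1 \<and> l = 0)" using h by auto
    thus False
    proof
      assume kl: "k = 0 \<and> l = 1"
      show False
      proof (rule no_antiaut[OF n h(2) h(4)])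
        fix x assume "x \<in> Cn n"
        from E[OF this] kl show "s \<circ> x \<circ> inv' s = t \<circ> inv' x \<circ> inv' t" by simp
      qed
    next
      assume kl: "k = 1 \<and> l = 0"
      show False
      proof (rule no_antiaut[OF n h(4) h(2)])
        fix x assume "x \<in> Cn n"
        from E[OF this] kl show "t \<circ> x \<circ> inv' t = s \<circ> inv' x \<circ> inv' s" by simp
      qed
    qed
  qed
  have E2: "s \<circ> x \<circ> inv' s = t \<circ> x \<circ> inv' t" if x: "x \<in> Cn n" for x
  proof (cases "k = 0")
    case True thus ?thesis using E[OF x] kl by simp
  next
    case False
    have "inv' x \<in> Cn n" using Cn_inv[OF x] .
    from E[OF this] show ?thesis using False kl Cn_bij[OF x] by (simp add: inv_inv_eq)
  qed
  have "inv' t \<circ> s = id"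
  proof (rule centralizer[OF n Sn_comp[OF Sn_inv[OF h(4)] h(2)]])
    fix x assume x: "x \<in> Cn n"
    have "inv' t \<circ> (s \<circ> x \<circ> inv' s) \<circ> s = inv' t \<circ> (t \<circ> x \<circ> inv' t) \<circ> s" using E2[OF x] by simp
    thus "inv' t \<circ> s \<circ> x = x \<circ> (inv' t \<circ> s)" using bj Cn_bij[OF x] by (simp add: permsimps)
  qed
  hence "t \<circ> (inv' t \<circ> s) = t" by simp
  hence "s = t" using bj by (simp add: cancel1)
  thus "P = Q" using P Q ab kl by simp
qed




lemma (in group) finite_closed_subgroup:
  assumes fin: "finite (carrier G)" and sub: "H \<subseteq> carrier G" and ne: "H \<noteq> {}"
    and cl: "\<And>a b. a \<in> H \<Longrightarrow> b \<in> H \<Longrightarrow> a \<otimes> b \<in> H"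
  shows "subgroup H G"
proof (rule subgroupI[OF sub ne _ cl])
  fix a assume a: "a \<in> H"
  have aG: "a \<in> carrier G" using a sub by auto
  have pw: "a [^] (Suc k) \<in> H" for k
  proof (induction k)
    case 0 thus ?case using a aG by simp
  next
    case (Suc k)
    have "a [^] (Suc (Suc k)) = a [^] (Suc k) \<otimes> a" by (simp add: nat_pow_Suc)
    thus ?case using cl[OF Suc a] by simp
  qed
  have o: "order G \<ge> 1" using fin order_gt_0_iff_finite by (metis One_nat_def Suc_leI)
  define m where "m = 2 * order G - 2"
  have sm: "Suc (Suc m) = order G * 2" using o unfolding m_def by linarith
  have "a [^] (Suc m) \<otimes> a = a [^] (Suc (Suc m))" by (rule nat_pow_Suc[symmetric])
  also have "\<dots> = a [^] (order G * 2)" by (simp only: sm)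
  also have "\<dots> = (a [^] order G) [^] (2::nat)" by (rule nat_pow_pow[OF aG, symmetric])
  also have "\<dots> = \<one>" by (simp only: pow_order_eq_1[OF aG] nat_pow_one)
  finally have "inv a = a [^] (Suc m)"
    using inv_equality[of "a [^] (Suc m)" a] aG by simp
  thus "inv a \<in> H" using pw by simp
qed

lemma hom_bij_is_iso_sym:
  assumes h: "f \<in> hom G H" and cl: "\<And>x y. x \<in> carrier G \<Longrightarrow> y \<in> carrier G \<Longrightarrow> x \<otimes>\<^bsub>G\<^esub> y \<in> carrier G" and b: "bij_betw f (carrier G) (carrier H)"
  shows "H \<cong> G"
proof -
  have HG: "bij_betw (inv_into (carrier G) f) (carrier H) (carrier G)"
    by (simp add: b bij_betw_inv_into)
  have *: "\<And>x. x \<in> carrier H \<Longrightarrow> inv_into (carrier G) f x \<in> carrier G"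
    by (meson HG bij_betwE)
  have "inv_into (carrier G) f \<in> hom H G"
    unfolding hom_def
  proof safe
    show "\<And>x. x \<in> carrier H \<Longrightarrow> inv_into (carrier G) f x \<in> carrier G" by (rule *)
    show "inv_into (carrier G) f (x \<otimes>\<^bsub>H\<^esub> y) = inv_into (carrier G) f x \<otimes>\<^bsub>G\<^esub> inv_into (carrier G) f y"
      if "x \<in> carrier H" "y \<in> carrier H" for x y
    proof (rule inv_into_f_eq)
      show "inj_on f (carrier G)" using bij_betw_def b by blast
      have "inv_into (carrier G) f x \<otimes>\<^bsub>G\<^esub> inv_into (carrier G) f y \<in> carrier G"
        using cl * that by blast
      then show "inv_into (carrier G) f x \<otimes>\<^bsub>G\<^esub> inv_into (carrier G) f y \<in> carrier G" .
      show "f (inv_into (carrier G) f x \<otimes>\<^bsub>G\<^esub> inv_into (carrier G) f y) = x \<otimes>\<^bsub>H\<^esub> y"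
        using h bij_betw_inv_into_right [OF b] * that cl unfolding hom_def by simp
    qed
  qed
  thus ?thesis using HG unfolding is_iso_def iso_def by blast
qed




abbreviation "AutG n \<equiv> cay_aut_group (alt_group n) (T3 n)"

lemma finite_Bij: "finite A \<Longrightarrow> finite (Bij A)"
proof -
  assume f: "finite A"
  have "Bij A \<subseteq> A \<rightarrow>\<^sub>E A"
  proof
    fix f assume "f \<in> Bij A"
    thus "f \<in> A \<rightarrow>\<^sub>E A" by (simp add: PiE_def Bij_imp_funcset Bij_imp_extensional)
  qed
  moreover have "finite (A \<rightarrow>\<^sub>E A)" using f by (simp add: finite_PiE)
  ultimately show ?thesis by (rule finite_subset)
qed

lemma Aut_carrier: "carrier (AutG n) = cay_auts (alt_group n) (T3 n)"
  by (simp add: cay_aut_group_def BijGroup_def)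
lemma Aut_mult: "f \<in> Bij (Cn n) \<Longrightarrow> g \<in> Bij (Cn n) \<Longrightarrow> f \<otimes>\<^bsub>AutG n\<^esub> g = compose (Cn n) f g"
  by (simp add: cay_aut_group_def BijGroup_def)
lemma Aut_one: "\<one>\<^bsub>AutG n\<^esub> = (\<lambda>x\<in>Cn n. x)"
  by (simp add: cay_aut_group_def BijGroup_def)
lemma auts_Bij: "cay_auts G T \<subseteq> Bij (carrier G)"
  by (auto simp: cay_auts_def)

lemma Bij_mult: "f \<in> Bij A \<Longrightarrow> g \<in> Bij A \<Longrightarrow> f \<otimes>\<^bsub>BijGroup A\<^esub> g = compose A f g"
  by (simp add: BijGroup_def)

lemma auts_subgroup: "subgroup (cay_auts (alt_group n) (T3 n)) (BijGroup (Cn n))"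
proof (rule group.finite_closed_subgroup[OF group_BijGroup])
  show "finite (carrier (BijGroup (Cn n)))" using finite_Bij[OF finite_Cn] by (simp add: BijGroup_def)
  show "cay_auts (alt_group n) (T3 n) \<subseteq> carrier (BijGroup (Cn n))"
    using auts_Bij by (simp add: BijGroup_def)
  have "(\<lambda>x\<in>Cn n. x) \<in> cay_auts (alt_group n) (T3 n)"
    unfolding cay_auts_def using id_Bij by simp
  thus "cay_auts (alt_group n) (T3 n) \<noteq> {}" by blast
  fix f g assume f: "f \<in> cay_auts (alt_group n) (T3 n)" and g: "g \<in> cay_auts (alt_group n) (T3 n)"
  have fb: "f \<in> Bij (Cn n)" and gb: "g \<in> Bij (Cn n)" using f g unfolding cay_auts_def by blast+
  have gin: "\<And>x. x \<in> Cn n \<Longrightarrow> g x \<in> Cn n" using Bij_imp_funcset[OF gb] by auto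
  have "compose (Cn n) f g \<in> cay_auts (alt_group n) (T3 n)"
    unfolding cay_auts_def
  proof (intro CollectI conjI ballI)
    show "compose (Cn n) f g \<in> Bij (Cn n)" by (rule compose_Bij[OF fb gb])
    fix x y assume x: "x \<in> Cn n" and y: "y \<in> Cn n"
    have "{x, y} \<in> cay_edges (alt_group n) (T3 n) \<longleftrightarrow> {g x, g y} \<in> cay_edges (alt_group n) (T3 n)"
      using g x y unfolding cay_auts_def by blast
    also have "\<dots> \<longleftrightarrow> {f (g x), f (g y)} \<in> cay_edges (alt_group n) (T3 n)"
      using f gin[OF x] gin[OF y] unfolding cay_auts_def by blast
    finally show "{x, y} \<in> cay_edges (alt_group n) (T3 n) \<longleftrightarrow>
        {compose (Cn n) f g x, compose (Cn n) f g y} \<in> cay_edges (alt_group n) (T3 n)"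
      using x y by (simp add: compose_def)
  qed
  thus "f \<otimes>\<^bsub>BijGroup (Cn n)\<^esub> g \<in> cay_auts (alt_group n) (T3 n)" using Bij_mult[OF fb gb] by simp
qed

lemma Aut_group: "group (AutG n)"
  using subgroup.subgroup_is_group[OF auts_subgroup group_BijGroup]
  by (simp add: cay_aut_group_def)

lemma Aut_finite: "finite (carrier (AutG n))"
  unfolding Aut_carrier by (rule finite_subset[OF auts_Bij finite_Bij[OF finite_Cn]])

lemma Psi_mult_Aut:
  assumes "P \<in> carrier (BSD n)" "Q \<in> carrier (BSD n)"
  shows "Psi n P \<otimes>\<^bsub>AutG n\<^esub> Psi n Q = Psi n (P \<otimes>\<^bsub>BSD n\<^esub> Q)"
  using Aut_mult[OF Psi_Bij[OF assms(1)] Psi_Bij[OF assms(2)]] Psi_mult[OF assms] by simp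

lemma Psi_subgroup:
  assumes K: "K \<subseteq> carrier (BSD n)" "K \<noteq> {}"
    and cl: "\<And>P Q. P \<in> K \<Longrightarrow> Q \<in> K \<Longrightarrow> P \<otimes>\<^bsub>BSD n\<^esub> Q \<in> K"
  shows "subgroup (Psi n ` K) (AutG n)"
proof (rule group.finite_closed_subgroup[OF Aut_group Aut_finite])
  show "Psi n ` K \<subseteq> carrier (AutG n)" using Psi_aut K(1) unfolding Aut_carrier by blast
  show "Psi n ` K \<noteq> {}" using K by blast
  fix f g assume "f \<in> Psi n ` K" "g \<in> Psi n ` K"
  then obtain P Q where PQ: "P \<in> K" "Q \<in> K" "f = Psi n P" "g = Psi n Q" by blast
  have "f \<otimes>\<^bsub>AutG n\<^esub> g = Psi n (P \<otimes>\<^bsub>BSD n\<^esub> Q)"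
    using Psi_mult_Aut[of P n Q] PQ K(1) by blast
  thus "f \<otimes>\<^bsub>AutG n\<^esub> g \<in> Psi n ` K" using cl[OF PQ(1,2)] by blast
qed




lemma psi0: "q \<in> carrier (SD n) \<Longrightarrow> psi n 0 q = q"
  by (simp add: psi_def)
lemma psi1: "(b,t) \<in> carrier (SD n) \<Longrightarrow> psi n 1 (b,t) = (inv' b, b \<circ> t)"
  by (simp add: psi_def)

definition "KR n = {((a,id),0) | a. a \<in> Cn n}"
definition "KI n = {((id,s),0) | s. s \<in> Sn n}"
definition "Kh = {((id,id),0), ((id,id),1)}"
definition "KRI n = carrier (SD n) \<times> {0}"

lemma KR_sub: "KR n \<subseteq> carrier (BSD n)"
  by (auto simp: KR_def BSD_carrier Sn_id)
lemma KI_sub: "KI n \<subseteq> carrier (BSD n)"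
  by (auto simp: KI_def BSD_carrier Cn_id)
lemma Kh_sub: "Kh \<subseteq> carrier (BSD n)"
  by (auto simp: Kh_def BSD_carrier Cn_id Sn_id)
lemma KRI_sub: "KRI n \<subseteq> carrier (BSD n)"
  by (auto simp: KRI_def BSD_carrier SD_carrier)

lemma KR_mult: "a \<in> Cn n \<Longrightarrow> b \<in> Cn n \<Longrightarrow> ((a,id),0) \<otimes>\<^bsub>BSD n\<^esub> ((b,id),0) = ((a \<circ> b, id), 0)"
  by (simp add: BSD_mult psi0 SD_carrier Sn_id SD_mult)
lemma KI_mult: "s \<in> Sn n \<Longrightarrow> t \<in> Sn n \<Longrightarrow> ((id,s),0) \<otimes>\<^bsub>BSD n\<^esub> ((id,t),0) = ((id, s \<circ> t), 0)"
  by (simp add: BSD_mult psi0 SD_carrier Cn_id SD_mult cancel3 Sn_bij)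
lemma KRI_mult: "p \<in> carrier (SD n) \<Longrightarrow> q \<in> carrier (SD n) \<Longrightarrow> (p,0) \<otimes>\<^bsub>BSD n\<^esub> (q,0) = (p \<otimes>\<^bsub>SD n\<^esub> q, 0)"
  by (simp add: BSD_mult psi0)

lemma SD_closed: "p \<in> carrier (SD n) \<Longrightarrow> q \<in> carrier (SD n) \<Longrightarrow> p \<otimes>\<^bsub>SD n\<^esub> q \<in> carrier (SD n)"
proof -
  assume p: "p \<in> carrier (SD n)" and q: "q \<in> carrier (SD n)"
  have "(p,0) \<otimes>\<^bsub>BSD n\<^esub> (q,0) \<in> carrier (BSD n)"
    using BSD_closed[of "(p,0)" n "(q,0)"] p q by (simp add: BSD_carrier SD_carrier)
  thus ?thesis by (simp add: KRI_mult[OF p q] BSD_carrier SD_carrier)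
qed

lemma KR_closed: "P \<in> KR n \<Longrightarrow> Q \<in> KR n \<Longrightarrow> P \<otimes>\<^bsub>BSD n\<^esub> Q \<in> KR n"
  by (auto simp: KR_def KR_mult Cn_comp)
lemma KI_closed: "P \<in> KI n \<Longrightarrow> Q \<in> KI n \<Longrightarrow> P \<otimes>\<^bsub>BSD n\<^esub> Q \<in> KI n"
  by (auto simp: KI_def KI_mult Sn_comp)
lemma KRI_closed: "P \<in> KRI n \<Longrightarrow> Q \<in> KRI n \<Longrightarrow> P \<otimes>\<^bsub>BSD n\<^esub> Q \<in> KRI n"
  by (auto simp: KRI_def KRI_mult SD_closed)
lemma Kh_closed: "P \<in> Kh \<Longrightarrow> Q \<in> Kh \<Longrightarrow> P \<otimes>\<^bsub>BSD n\<^esub> Q \<in> Kh"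
  by (auto simp: Kh_def BSD_mult psi0 psi1 SD_carrier Cn_id Sn_id SD_mult)




lemma Psi_R: "Psi n ((a,id),0) = (\<lambda>x\<in>Cn n. x \<circ> inv' a)"
  by (simp add: Psi_def)
lemma Psi_I: "Psi n ((id,s),0) = (\<lambda>x\<in>Cn n. s \<circ> x \<circ> inv' s)"
  by (simp add: Psi_def)
lemma Psi_h: "Psi n ((id,id),1) = (\<lambda>x\<in>Cn n. inv' x)"
  by (simp add: Psi_def)
lemma Psi_1: "Psi n ((id,id),0) = (\<lambda>x\<in>Cn n. x)"
  by (simp add: Psi_def)

lemma R_eq: "(\<lambda>g. \<lambda>x\<in>Cn n. x \<otimes>\<^bsub>alt_group n\<^esub> g) ` Cn n = Psi n ` KR n"
proof
  show "(\<lambda>g. \<lambda>x\<in>Cn n. x \<otimes>\<^bsub>alt_group n\<^esub> g) ` Cn n \<subseteq> Psi n ` KR n"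
  proof
    fix f assume "f \<in> (\<lambda>g. \<lambda>x\<in>Cn n. x \<otimes>\<^bsub>alt_group n\<^esub> g) ` Cn n"
    then obtain g where g: "g \<in> Cn n" "f = (\<lambda>x\<in>Cn n. x \<circ> g)" by (auto simp: alt_group_mult)
    have "f = Psi n ((inv' g, id), 0)" using g Cn_bij[OF g(1)] by (simp add: Psi_R inv_inv_eq)
    moreover have "((inv' g, id), 0) \<in> KR n" using Cn_inv[OF g(1)] by (simp add: KR_def)
    ultimately show "f \<in> Psi n ` KR n" by blast
  qed
  show "Psi n ` KR n \<subseteq> (\<lambda>g. \<lambda>x\<in>Cn n. x \<otimes>\<^bsub>alt_group n\<^esub> g) ` Cn n"
  proof
    fix f assume "f \<in> Psi n ` KR n"
    then obtain a where a: "a \<in> Cn n" "f = Psi n ((a,id),0)" by (auto simp: KR_def)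
    have "f = (\<lambda>x\<in>Cn n. x \<otimes>\<^bsub>alt_group n\<^esub> inv' a)" using a by (simp add: Psi_R alt_group_mult)
    thus "f \<in> (\<lambda>g. \<lambda>x\<in>Cn n. x \<otimes>\<^bsub>alt_group n\<^esub> g) ` Cn n" using Cn_inv[OF a(1)] by blast
  qed
qed

lemma I_eq: "(\<lambda>\<sigma>. \<lambda>x\<in>Cn n. \<sigma> \<circ> x \<circ> inv' \<sigma>) ` Sn n = Psi n ` KI n"
  unfolding KI_def by (auto simp: Psi_I image_iff)

lemma h_eq: "(\<lambda>x\<in>Cn n. inv\<^bsub>alt_group n\<^esub> x) = Psi n ((id,id),1)"
  by (simp add: Psi_h alt_inv cong: restrict_cong)

lemma one_eq: "\<one>\<^bsub>AutG n\<^esub> = Psi n ((id,id),0)"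
  unfolding cay_aut_group_def BijGroup_def by (simp add: Psi_1)

lemma Kh_img: "{\<one>\<^bsub>AutG n\<^esub>, Psi n ((id,id),1)} = Psi n ` Kh"
  unfolding one_eq Kh_def by simp

lemma setmult_Psi:
  assumes "K1 \<subseteq> carrier (BSD n)" "K2 \<subseteq> carrier (BSD n)"
  shows "Psi n ` K1 <#>\<^bsub>AutG n\<^esub> Psi n ` K2 = Psi n ` {P \<otimes>\<^bsub>BSD n\<^esub> Q | P Q. P \<in> K1 \<and> Q \<in> K2}"
proof -
  have eq: "\<And>P Q. P \<in> K1 \<Longrightarrow> Q \<in> K2 \<Longrightarrow> Psi n P \<otimes>\<^bsub>AutG n\<^esub> Psi n Q = Psi n (P \<otimes>\<^bsub>BSD n\<^esub> Q)"
    using Psi_mult_Aut assms by blast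
  have "Psi n ` K1 <#>\<^bsub>AutG n\<^esub> Psi n ` K2 = (\<Union>P\<in>K1. \<Union>Q\<in>K2. {Psi n P \<otimes>\<^bsub>AutG n\<^esub> Psi n Q})"
    unfolding set_mult_def by blast
  also have "\<dots> = (\<Union>P\<in>K1. \<Union>Q\<in>K2. {Psi n (P \<otimes>\<^bsub>BSD n\<^esub> Q)})"
  proof (rule SUP_cong[OF refl])
    fix P assume P: "P \<in> K1"
    show "(\<Union>Q\<in>K2. {Psi n P \<otimes>\<^bsub>AutG n\<^esub> Psi n Q}) = (\<Union>Q\<in>K2. {Psi n (P \<otimes>\<^bsub>BSD n\<^esub> Q)})"
    proof (rule SUP_cong[OF refl])
      fix Q assume Q: "Q \<in> K2"
      show "{Psi n P \<otimes>\<^bsub>AutG n\<^esub> Psi n Q} = {Psi n (P \<otimes>\<^bsub>BSD n\<^esub> Q)}"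
        by (simp only: eq[OF P Q])
    qed
  qed
  also have "\<dots> = Psi n ` {P \<otimes>\<^bsub>BSD n\<^esub> Q | P Q. P \<in> K1 \<and> Q \<in> K2}" by blast
  finally show ?thesis .
qed

lemma KR_KI: "{P \<otimes>\<^bsub>BSD n\<^esub> Q | P Q. P \<in> KR n \<and> Q \<in> KI n} = KRI n"
proof
  show "{P \<otimes>\<^bsub>BSD n\<^esub> Q | P Q. P \<in> KR n \<and> Q \<in> KI n} \<subseteq> KRI n"
    by (auto simp: KR_def KI_def KRI_def BSD_mult psi0 SD_carrier Cn_id SD_mult)
  show "KRI n \<subseteq> {P \<otimes>\<^bsub>BSD n\<^esub> Q | P Q. P \<in> KR n \<and> Q \<in> KI n}"
  proof
    fix Z :: "((nat \<Rightarrow> nat) \<times> (nat \<Rightarrow> nat)) \<times> int" assume "Z \<in> KRI n"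
    then obtain a s where Z: "Z = ((a,s),(0::int))" "a \<in> Cn n" "s \<in> Sn n" by (auto simp: KRI_def SD_carrier)
    have "Z = ((a,id),0) \<otimes>\<^bsub>BSD n\<^esub> ((id,s),0)"
      using Z by (simp add: BSD_mult psi0 SD_carrier Cn_id SD_mult)
    moreover have "((a,id),0) \<in> KR n" "((id,s),0) \<in> KI n" using Z by (auto simp: KR_def KI_def)
    ultimately show "Z \<in> {P \<otimes>\<^bsub>BSD n\<^esub> Q | P Q. P \<in> KR n \<and> Q \<in> KI n}" by blast
  qed
qed

lemma KRI_Kh: "{P \<otimes>\<^bsub>BSD n\<^esub> Q | P Q. P \<in> KRI n \<and> Q \<in> Kh} = carrier (BSD n)"
proof
  show "{P \<otimes>\<^bsub>BSD n\<^esub> Q | P Q. P \<in> KRI n \<and> Q \<in> Kh} \<subseteq> carrier (BSD n)"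
    using BSD_closed KRI_sub Kh_sub by blast
  show "carrier (BSD n) \<subseteq> {P \<otimes>\<^bsub>BSD n\<^esub> Q | P Q. P \<in> KRI n \<and> Q \<in> Kh}"
  proof
    fix Z :: "((nat \<Rightarrow> nat) \<times> (nat \<Rightarrow> nat)) \<times> int" assume "Z \<in> carrier (BSD n)"
    then obtain a s k where Z: "Z = ((a,s),(k::int))" "a \<in> Cn n" "s \<in> Sn n" "k \<in> {0,1}"
      by (auto simp: BSD_carrier)
    have "Z = ((a,s),0) \<otimes>\<^bsub>BSD n\<^esub> ((id,id),k)"
      using Z by (auto simp: BSD_mult psi0 psi1 SD_carrier Cn_id Sn_id SD_mult cancel3 Sn_bij)
    moreover have "((a,s),0) \<in> KRI n" "((id,id),k) \<in> Kh" using Z by (auto simp: KRI_def Kh_def SD_carrier)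
    ultimately show "Z \<in> {P \<otimes>\<^bsub>BSD n\<^esub> Q | P Q. P \<in> KRI n \<and> Q \<in> Kh}" by blast
  qed
qed

lemma inv_Psi: "n \<ge> 4 \<Longrightarrow> P \<in> carrier (BSD n) \<Longrightarrow> inv_into (carrier (BSD n)) (Psi n) (Psi n P) = P"
  using inv_into_f_f[OF Psi_inj] by blast




lemma Gsub_mult: "x \<otimes>\<^bsub>GG\<lparr>carrier := XX\<rparr>\<^esub> y = x \<otimes>\<^bsub>GG\<^esub> y"
  by simp

lemma normal_proj:
  assumes n: "n \<ge> 4" and K: "K \<subseteq> carrier (BSD n)" "K \<noteq> {}"
      "\<And>P Q. P \<in> K \<Longrightarrow> Q \<in> K \<Longrightarrow> P \<otimes>\<^bsub>BSD n\<^esub> Q \<in> K"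
    and H: "group H" and pc: "\<And>P. P \<in> K \<Longrightarrow> \<pi> P \<in> carrier H"
    and pm: "\<And>P Q. P \<in> K \<Longrightarrow> Q \<in> K \<Longrightarrow> \<pi> (P \<otimes>\<^bsub>BSD n\<^esub> Q) = \<pi> P \<otimes>\<^bsub>H\<^esub> \<pi> Q"
    and KN: "KN = {P \<in> K. \<pi> P = \<one>\<^bsub>H\<^esub>}"
  shows "Psi n ` KN \<lhd> (AutG n)\<lparr>carrier := Psi n ` K\<rparr>"
proof -
  let ?G = "(AutG n)\<lparr>carrier := Psi n ` K\<rparr>"
  have sg: "subgroup (Psi n ` K) (AutG n)" by (rule Psi_subgroup[OF K])
  have G: "group ?G" by (rule subgroup.subgroup_is_group[OF sg Aut_group])
  define \<rho> where "\<rho> = (\<lambda>f. \<pi> (inv_into (carrier (BSD n)) (Psi n) f))"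
  have \<rho>P: "\<rho> (Psi n P) = \<pi> P" if PK: "P \<in> K" for P
  proof -
    have "P \<in> carrier (BSD n)" using K(1) PK by blast
    thus ?thesis unfolding \<rho>_def using inv_Psi[OF n] by simp
  qed
  have hom: "\<rho> \<in> hom ?G H"
  proof (rule homI)
    fix x assume "x \<in> carrier ?G"
    then obtain P where "P \<in> K" "x = Psi n P" by auto
    thus "\<rho> x \<in> carrier H" using \<rho>P pc by simp
  next
    fix x y assume "x \<in> carrier ?G" "y \<in> carrier ?G"
    then obtain P Q where PQ: "P \<in> K" "Q \<in> K" "x = Psi n P" "y = Psi n Q" by auto
    have "x \<otimes>\<^bsub>AutG n\<^esub> y = Psi n (P \<otimes>\<^bsub>BSD n\<^esub> Q)"
      using Psi_mult_Aut[of P n Q] PQ K(1) by blast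
    hence "x \<otimes>\<^bsub>?G\<^esub> y = Psi n (P \<otimes>\<^bsub>BSD n\<^esub> Q)" by (simp only: Gsub_mult)
    thus "\<rho> (x \<otimes>\<^bsub>?G\<^esub> y) = \<rho> x \<otimes>\<^bsub>H\<^esub> \<rho> y" using \<rho>P PQ K(3) pm by simp
  qed
  have gh: "group_hom ?G H \<rho>" using G H hom by (simp add: group_hom_def group_hom_axioms_def)
  have "kernel ?G H \<rho> = Psi n ` KN"
  proof
    show "kernel ?G H \<rho> \<subseteq> Psi n ` KN"
    proof
      fix x assume "x \<in> kernel ?G H \<rho>"
      then obtain P where "P \<in> K" "x = Psi n P" "\<rho> x = \<one>\<^bsub>H\<^esub>" by (auto simp: kernel_def)
      thus "x \<in> Psi n ` KN" using \<rho>P KN by auto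
    qed
    show "Psi n ` KN \<subseteq> kernel ?G H \<rho>"
      using \<rho>P KN by (auto simp: kernel_def)
  qed
  thus ?thesis using group_hom.normal_kernel[OF gh] by simp
qed

lemma iso_Psi:
  assumes n: "n \<ge> 4" and KS: "KS \<subseteq> carrier (BSD n)"
    and e: "bij_betw e (carrier G) KS"
    and em: "\<And>x y. x \<in> carrier G \<Longrightarrow> y \<in> carrier G \<Longrightarrow> e (x \<otimes>\<^bsub>G\<^esub> y) = e x \<otimes>\<^bsub>BSD n\<^esub> e y"
    and cl: "\<And>x y. x \<in> carrier G \<Longrightarrow> y \<in> carrier G \<Longrightarrow> x \<otimes>\<^bsub>G\<^esub> y \<in> carrier G"
  shows "(AutG n)\<lparr>carrier := Psi n ` KS\<rparr> \<cong> G"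
proof -
  let ?G = "(AutG n)\<lparr>carrier := Psi n ` KS\<rparr>"
  have eK: "\<And>x. x \<in> carrier G \<Longrightarrow> e x \<in> KS" using e bij_betwE by blast
  have hom: "(Psi n \<circ> e) \<in> hom G ?G"
  proof (rule homI)
    fix x assume "x \<in> carrier G"
    thus "(Psi n \<circ> e) x \<in> carrier ?G" using eK by simp
  next
    fix x y assume x: "x \<in> carrier G" and y: "y \<in> carrier G"
    have "Psi n (e x) \<otimes>\<^bsub>AutG n\<^esub> Psi n (e y) = Psi n (e x \<otimes>\<^bsub>BSD n\<^esub> e y)"
      using Psi_mult_Aut[of "e x" n "e y"] eK[OF x] eK[OF y] KS by blast
    hence "Psi n (e x) \<otimes>\<^bsub>?G\<^esub> Psi n (e y) = Psi n (e (x \<otimes>\<^bsub>G\<^esub> y))"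
      by (simp only: Gsub_mult em[OF x y])
    thus "(Psi n \<circ> e) (x \<otimes>\<^bsub>G\<^esub> y) = (Psi n \<circ> e) x \<otimes>\<^bsub>?G\<^esub> (Psi n \<circ> e) y" by simp
  qed
  have b2: "bij_betw (Psi n) KS (Psi n ` KS)"
    using inj_on_subset[OF Psi_inj[OF n] KS] by (rule inj_on_imp_bij_betw)
  have "bij_betw (Psi n \<circ> e) (carrier G) (carrier ?G)"
    using bij_betw_trans[OF e b2] by simp
  thus ?thesis using hom_bij_is_iso_sym[OF hom cl] by blast
qed

lemma psi_auto: assumes "k \<in> {0,1}" shows "psi n k \<in> auto (SD n)"
proof (cases "k = 0")
  case True
  have "psi n k = (\<lambda>q\<in>carrier (SD n). q)" using True by (simp add: psi_def)
  moreover have "(\<lambda>q\<in>carrier (SD n). q) \<in> hom (SD n) (SD n)"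
    by (rule homI) (auto simp: SD_closed)
  ultimately show ?thesis by (simp add: auto_def id_Bij)
next
  case False
  hence k: "k = 1" using assms by auto
  let ?f = "\<lambda>q\<in>carrier (SD n). (inv' (fst q), fst q \<circ> snd q)"
  have pk: "psi n k = ?f" using k by (simp add: psi_def)
  have fc: "?f q \<in> carrier (SD n)" if "q \<in> carrier (SD n)" for q
    using that Cn_inv Sn_comp Cn_Sn by (auto simp: SD_carrier)
  have ff: "?f (?f q) = q" if qq: "q \<in> carrier (SD n)" for q
  proof -
    obtain b t where q: "q = (b,t)" "b \<in> Cn n" "t \<in> Sn n" using qq by (auto simp: SD_carrier)
    have "?f q \<in> carrier (SD n)" using fc[OF qq] .
    thus ?thesis using q Cn_bij[OF q(2)] qq by (simp add: permsimps)
  qed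
  have hom: "?f \<in> hom (SD n) (SD n)"
  proof (rule homI)
    fix x assume "x \<in> carrier (SD n)" thus "?f x \<in> carrier (SD n)" by (rule fc)
  next
    fix x y assume x: "x \<in> carrier (SD n)" and y: "y \<in> carrier (SD n)"
    obtain a s where xx: "x = (a,s)" "a \<in> Cn n" "s \<in> Sn n" using x by (auto simp: SD_carrier)
    obtain b t where yy: "y = (b,t)" "b \<in> Cn n" "t \<in> Sn n" using y by (auto simp: SD_carrier)
    have bj: "bij a" "bij s" "bij b" "bij t" using xx yy Cn_bij Sn_bij by auto
    have xy: "x \<otimes>\<^bsub>SD n\<^esub> y \<in> carrier (SD n)" using SD_closed x y by blast
    show "?f (x \<otimes>\<^bsub>SD n\<^esub> y) = ?f x \<otimes>\<^bsub>SD n\<^esub> ?f y"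
      using xy x y xx yy bj by (simp add: SD_mult permsimps)
  qed
  have "bij_betw ?f (carrier (SD n)) (carrier (SD n))"
    by (rule bij_betw_byWitness[where f'="?f"]) (use ff fc in auto)
  hence "?f \<in> Bij (carrier (SD n))" by (simp add: Bij_def)
  thus ?thesis using hom pk by (simp add: auto_def)
qed

lemma psi_hom: "psi n \<in> hom (integer_mod_group 2) (AutoGroup (SD n))"
proof (rule homI)
  fix k assume "k \<in> carrier (integer_mod_group 2)"
  thus "psi n k \<in> carrier (AutoGroup (SD n))" using psi_auto by (simp add: Z2_carrier AutoGroup_def)
next
  fix k l assume k: "k \<in> carrier (integer_mod_group 2)" and l: "l \<in> carrier (integer_mod_group 2)"
  have kl: "k \<in> {0,1}" "l \<in> {0,1}" using k l by (simp_all add: Z2_carrier)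
  have B: "psi n k \<in> Bij (carrier (SD n))" "psi n l \<in> Bij (carrier (SD n))"
    using psi_auto[OF kl(1)] psi_auto[OF kl(2)] by (auto simp: auto_def)
  have m: "psi n k \<otimes>\<^bsub>AutoGroup (SD n)\<^esub> psi n l = compose (carrier (SD n)) (psi n k) (psi n l)"
    using B by (simp add: AutoGroup_def BijGroup_def)
  have "psi n ((k + l) mod 2) = compose (carrier (SD n)) (psi n k) (psi n l)"
  proof
    fix q
    show "psi n ((k + l) mod 2) q = compose (carrier (SD n)) (psi n k) (psi n l) q"
    proof (cases "q \<in> carrier (SD n)")
      case False thus ?thesis by (simp add: psi_def compose_def)
    next
      case True
      obtain b t where q: "q = (b,t)" "b \<in> Cn n" "t \<in> Sn n" using True by (auto simp: SD_carrier)
      have bj: "bij b" "bij t" using q Cn_bij Sn_bij by auto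
      have c1: "(inv' b, b \<circ> t) \<in> carrier (SD n)" using q Cn_inv Sn_comp Cn_Sn by (auto simp: SD_carrier)
      show ?thesis using kl True q bj c1 by (auto simp: psi_def compose_def permsimps)
    qed
  qed
  thus "psi n (k \<otimes>\<^bsub>integer_mod_group 2\<^esub> l) = psi n k \<otimes>\<^bsub>AutoGroup (SD n)\<^esub> psi n l"
    using m by simp
qed




lemma KR_ne: "KR n \<noteq> {}" using Cn_id by (auto simp: KR_def)
lemma KI_ne: "KI n \<noteq> {}" using Sn_id by (auto simp: KI_def)
lemma KRI_ne: "KRI n \<noteq> {}" using Cn_id Sn_id by (auto simp: KRI_def SD_carrier)
lemma BSD_ne: "carrier (BSD n) \<noteq> {}" using Cn_id Sn_id by (auto simp: BSD_carrier)

theorem theorem2p2: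
  fixes n :: nat
  assumes "n \<ge> 4"
  defines "A \<equiv> alt_group n"
      and "S \<equiv> sym_group n"
      and "Aut \<equiv> cay_aut_group (alt_group n) (three_cycles n)"
      and "R \<equiv> (\<lambda>g. \<lambda>x \<in> carrier (alt_group n). x \<otimes>\<^bsub>alt_group n\<^esub> g) ` carrier (alt_group n)"
      and "I \<equiv> (\<lambda>\<sigma>. \<lambda>x \<in> carrier (alt_group n). \<sigma> \<circ> x \<circ> inv' \<sigma>) ` carrier (sym_group n)"
      and "h \<equiv> (\<lambda>x \<in> carrier (alt_group n). inv\<^bsub>alt_group n\<^esub> x)"
  shows "subgroup R Aut \<and> subgroup I Aut \<and> subgroup {\<one>\<^bsub>Aut\<^esub>, h} Aut
       \<and> h \<noteq> \<one>\<^bsub>Aut\<^esub>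
       \<and> subgroup (R <#>\<^bsub>Aut\<^esub> I) Aut
       \<and> subgroup ((R <#>\<^bsub>Aut\<^esub> I) <#>\<^bsub>Aut\<^esub> {\<one>\<^bsub>Aut\<^esub>, h}) Aut
       \<and> R \<lhd> Aut\<lparr>carrier := R <#>\<^bsub>Aut\<^esub> I\<rparr>
       \<and> R \<inter> I = {\<one>\<^bsub>Aut\<^esub>}
       \<and> (R <#>\<^bsub>Aut\<^esub> I) \<lhd> Aut\<lparr>carrier := (R <#>\<^bsub>Aut\<^esub> I) <#>\<^bsub>Aut\<^esub> {\<one>\<^bsub>Aut\<^esub>, h}\<rparr>
       \<and> (R <#>\<^bsub>Aut\<^esub> I) \<inter> {\<one>\<^bsub>Aut\<^esub>, h} = {\<one>\<^bsub>Aut\<^esub>}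
       \<and> Aut\<lparr>carrier := R\<rparr> \<cong> A
       \<and> Aut\<lparr>carrier := I\<rparr> \<cong> S
       \<and> Aut\<lparr>carrier := R <#>\<^bsub>Aut\<^esub> I\<rparr> \<cong> semidirect A S (\<lambda>\<sigma> a. \<sigma> \<circ> a \<circ> inv' \<sigma>)
       \<and> (\<exists>\<psi>. \<psi> \<in> hom (integer_mod_group 2) (AutoGroup (semidirect A S (\<lambda>\<sigma> a. \<sigma> \<circ> a \<circ> inv' \<sigma>)))
            \<and> Aut\<lparr>carrier := (R <#>\<^bsub>Aut\<^esub> I) <#>\<^bsub>Aut\<^esub> {\<one>\<^bsub>Aut\<^esub>, h}\<rparr>
                \<cong> semidirect (semidirect A S (\<lambda>\<sigma> a. \<sigma> \<circ> a \<circ> inv' \<sigma>)) (integer_mod_group 2) \<psi>)"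
proof -
  note n = assms(1)
  have Autd: "Aut = AutG n" unfolding Aut_def by (rule refl)
  have Req: "R = Psi n ` KR n" unfolding R_def by (rule R_eq)
  have Ieq: "I = Psi n ` KI n" unfolding I_def by (rule I_eq)
  have heq: "h = Psi n ((id,id),1)" unfolding h_def by (rule h_eq)
  have one: "\<one>\<^bsub>Aut\<^esub> = Psi n ((id,id),0)" unfolding Autd by (rule one_eq)
  have hset: "{\<one>\<^bsub>Aut\<^esub>, h} = Psi n ` Kh" unfolding one heq Kh_def by simp
  have RI: "R <#>\<^bsub>Aut\<^esub> I = Psi n ` KRI n"
    unfolding Req Ieq Autd setmult_Psi[OF KR_sub KI_sub] KR_KI by (rule refl)
  have RIh: "(R <#>\<^bsub>Aut\<^esub> I) <#>\<^bsub>Aut\<^esub> {\<one>\<^bsub>Aut\<^esub>, h} = Psi n ` carrier (BSD n)"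
    unfolding RI hset unfolding Autd setmult_Psi[OF KRI_sub Kh_sub] KRI_Kh by (rule refl)
  have c1: "subgroup R Aut"
    unfolding Req Autd by (rule Psi_subgroup[OF KR_sub KR_ne KR_closed])
  have c2: "subgroup I Aut"
    unfolding Ieq Autd by (rule Psi_subgroup[OF KI_sub KI_ne KI_closed])
  have c3: "subgroup {\<one>\<^bsub>Aut\<^esub>, h} Aut"
    unfolding hset unfolding Autd by (rule Psi_subgroup[OF Kh_sub _ Kh_closed]) (simp add: Kh_def)
  have idin: "((id,id),0) \<in> carrier (BSD n)" "((id,id),1) \<in> carrier (BSD n)"
    using Cn_id Sn_id by (auto simp: BSD_carrier)
  have c4: "h \<noteq> \<one>\<^bsub>Aut\<^esub>"
    unfolding heq unfolding one using inj_on_eq_iff[OF Psi_inj[OF n] idin(2) idin(1)] by simp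
  have c5: "subgroup (R <#>\<^bsub>Aut\<^esub> I) Aut"
    unfolding RI unfolding Autd by (rule Psi_subgroup[OF KRI_sub KRI_ne KRI_closed])
  have c6: "subgroup ((R <#>\<^bsub>Aut\<^esub> I) <#>\<^bsub>Aut\<^esub> {\<one>\<^bsub>Aut\<^esub>, h}) Aut"
    unfolding RIh unfolding Autd by (rule Psi_subgroup[OF subset_refl BSD_ne BSD_closed])
  have c7: "R \<lhd> Aut\<lparr>carrier := R <#>\<^bsub>Aut\<^esub> I\<rparr>"
    unfolding RI unfolding Req unfolding Autd
  proof (rule normal_proj[OF n KRI_sub KRI_ne KRI_closed sym_group_is_group, where \<pi>="\<lambda>P. snd (fst P)"])
    fix P :: "((nat \<Rightarrow> nat) \<times> (nat \<Rightarrow> nat)) \<times> int" assume "P \<in> KRI n" thus "snd (fst P) \<in> carrier (sym_group n)" by (auto simp: KRI_def SD_carrier)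
  next
    fix P Q :: "((nat \<Rightarrow> nat) \<times> (nat \<Rightarrow> nat)) \<times> int" assume "P \<in> KRI n" "Q \<in> KRI n"
    then obtain a s b t where "P = ((a,s),0)" "Q = ((b,t),0)" "(a,s) \<in> carrier (SD n)" "(b,t) \<in> carrier (SD n)"
      by (auto simp: KRI_def)
    thus "snd (fst (P \<otimes>\<^bsub>BSD n\<^esub> Q)) = snd (fst P) \<otimes>\<^bsub>sym_group n\<^esub> snd (fst Q)"
      by (simp add: KRI_mult SD_mult sym_group_mult)
  next
    show "KR n = {P \<in> KRI n. snd (fst P) = \<one>\<^bsub>sym_group n\<^esub>}"
      by (auto simp: KR_def KRI_def SD_carrier sym_group_one Sn_id)
  qed
  have c8: "R \<inter> I = {\<one>\<^bsub>Aut\<^esub>}"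
  proof -
    have "Psi n ` KR n \<inter> Psi n ` KI n = Psi n ` (KR n \<inter> KI n)"
      using inj_on_image_Int[OF Psi_inj[OF n] KR_sub KI_sub] by simp
    moreover have "KR n \<inter> KI n = {((id,id),0)}" using Cn_id Sn_id by (auto simp: KR_def KI_def)
    ultimately show ?thesis unfolding Req Ieq one by (metis image_empty image_insert)
  qed
  have c9: "(R <#>\<^bsub>Aut\<^esub> I) \<lhd> Aut\<lparr>carrier := (R <#>\<^bsub>Aut\<^esub> I) <#>\<^bsub>Aut\<^esub> {\<one>\<^bsub>Aut\<^esub>, h}\<rparr>"
    unfolding RIh unfolding RI unfolding Autd
  proof (rule normal_proj[OF n subset_refl BSD_ne BSD_closed group_integer_mod_group, where \<pi>="snd"])
    fix P :: "((nat \<Rightarrow> nat) \<times> (nat \<Rightarrow> nat)) \<times> int" assume "P \<in> carrier (BSD n)" thus "snd P \<in> carrier (integer_mod_group 2)"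
      by (auto simp: BSD_carrier Z2_carrier)
  next
    fix P Q :: "((nat \<Rightarrow> nat) \<times> (nat \<Rightarrow> nat)) \<times> int" assume "P \<in> carrier (BSD n)" "Q \<in> carrier (BSD n)"
    obtain p k q l where "P = (p,k)" "Q = (q,l)" by (metis prod.exhaust)
    thus "snd (P \<otimes>\<^bsub>BSD n\<^esub> Q) = snd P \<otimes>\<^bsub>integer_mod_group 2\<^esub> snd Q"
      by (simp add: BSD_mult)
  next
    show "KRI n = {P \<in> carrier (BSD n). snd P = \<one>\<^bsub>integer_mod_group 2\<^esub>}"
      by (auto simp: KRI_def BSD_carrier SD_carrier)
  qed
  have c10: "(R <#>\<^bsub>Aut\<^esub> I) \<inter> {\<one>\<^bsub>Aut\<^esub>, h} = {\<one>\<^bsub>Aut\<^esub>}"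
  proof -
    have "Psi n ` KRI n \<inter> Psi n ` Kh = Psi n ` (KRI n \<inter> Kh)"
      using inj_on_image_Int[OF Psi_inj[OF n] KRI_sub Kh_sub] by simp
    moreover have "KRI n \<inter> Kh = {((id,id),0)}" using Cn_id Sn_id by (auto simp: KRI_def Kh_def SD_carrier)
    ultimately show ?thesis unfolding RI hset unfolding one by (metis image_empty image_insert)
  qed
  have c11: "Aut\<lparr>carrier := R\<rparr> \<cong> A"
    unfolding Req Autd A_def
  proof (rule iso_Psi[OF n KR_sub])
    show "bij_betw (\<lambda>a. ((a,id),0::int)) (carrier (alt_group n)) (KR n)"
      by (auto simp: bij_betw_def inj_on_def KR_def)
    fix x y assume "x \<in> carrier (alt_group n)" "y \<in> carrier (alt_group n)"
    thus "((x \<otimes>\<^bsub>alt_group n\<^esub> y, id), 0::int) = ((x,id),0) \<otimes>\<^bsub>BSD n\<^esub> ((y,id),0)"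
      by (simp add: KR_mult alt_group_mult)
    show "x \<otimes>\<^bsub>alt_group n\<^esub> y \<in> carrier (alt_group n)"
      using \<open>x \<in> _\<close> \<open>y \<in> _\<close> by (simp add: alt_group_mult Cn_comp)
  qed
  have c12: "Aut\<lparr>carrier := I\<rparr> \<cong> S"
    unfolding Ieq Autd S_def
  proof (rule iso_Psi[OF n KI_sub])
    show "bij_betw (\<lambda>s. ((id,s),0::int)) (carrier (sym_group n)) (KI n)"
      by (auto simp: bij_betw_def inj_on_def KI_def)
    fix x y assume "x \<in> carrier (sym_group n)" "y \<in> carrier (sym_group n)"
    thus "((id, x \<otimes>\<^bsub>sym_group n\<^esub> y), 0::int) = ((id,x),0) \<otimes>\<^bsub>BSD n\<^esub> ((id,y),0)"
      by (simp add: KI_mult sym_group_mult)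
    show "x \<otimes>\<^bsub>sym_group n\<^esub> y \<in> carrier (sym_group n)"
      using \<open>x \<in> _\<close> \<open>y \<in> _\<close> by (simp add: sym_group_mult Sn_comp)
  qed
  have c13: "Aut\<lparr>carrier := R <#>\<^bsub>Aut\<^esub> I\<rparr> \<cong> semidirect A S (\<lambda>\<sigma> a. \<sigma> \<circ> a \<circ> inv' \<sigma>)"
    unfolding RI unfolding Autd A_def S_def SD_def[symmetric]
  proof (rule iso_Psi[OF n KRI_sub])
    show "bij_betw (\<lambda>p. (p,0::int)) (carrier (SD n)) (KRI n)"
      by (auto simp: bij_betw_def inj_on_def KRI_def)
    fix x y assume "x \<in> carrier (SD n)" "y \<in> carrier (SD n)"
    thus "(x \<otimes>\<^bsub>SD n\<^esub> y, 0::int) = (x,0) \<otimes>\<^bsub>BSD n\<^esub> (y,0)"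
      by (simp add: KRI_mult)
    show "x \<otimes>\<^bsub>SD n\<^esub> y \<in> carrier (SD n)"
      using \<open>x \<in> _\<close> \<open>y \<in> _\<close> by (rule SD_closed)
  qed
  have c14: "\<exists>\<psi>. \<psi> \<in> hom (integer_mod_group 2) (AutoGroup (semidirect A S (\<lambda>\<sigma> a. \<sigma> \<circ> a \<circ> inv' \<sigma>)))
            \<and> Aut\<lparr>carrier := (R <#>\<^bsub>Aut\<^esub> I) <#>\<^bsub>Aut\<^esub> {\<one>\<^bsub>Aut\<^esub>, h}\<rparr>
                \<cong> semidirect (semidirect A S (\<lambda>\<sigma> a. \<sigma> \<circ> a \<circ> inv' \<sigma>)) (integer_mod_group 2) \<psi>"
  proof (intro exI conjI)
    show "psi n \<in> hom (integer_mod_group 2) (AutoGroup (semidirect A S (\<lambda>\<sigma> a. \<sigma> \<circ> a \<circ> inv' \<sigma>)))"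
      unfolding A_def S_def SD_def[symmetric] by (rule psi_hom)
    show "Aut\<lparr>carrier := (R <#>\<^bsub>Aut\<^esub> I) <#>\<^bsub>Aut\<^esub> {\<one>\<^bsub>Aut\<^esub>, h}\<rparr>
                \<cong> semidirect (semidirect A S (\<lambda>\<sigma> a. \<sigma> \<circ> a \<circ> inv' \<sigma>)) (integer_mod_group 2) (psi n)"
      unfolding RIh unfolding Autd A_def S_def SD_def[symmetric] BSD_def[symmetric]
    proof (rule iso_Psi[OF n subset_refl])
      show "bij_betw (\<lambda>p. p) (carrier (BSD n)) (carrier (BSD n))" by (simp add: bij_betw_def)
      fix x y assume "x \<in> carrier (BSD n)" "y \<in> carrier (BSD n)"
      thus "x \<otimes>\<^bsub>BSD n\<^esub> y = x \<otimes>\<^bsub>BSD n\<^esub> y" by simp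
      show "x \<otimes>\<^bsub>BSD n\<^esub> y \<in> carrier (BSD n)"
        using \<open>x \<in> _\<close> \<open>y \<in> _\<close> by (rule BSD_closed)
    qed
  qed
  show ?thesis using c1 c2 c3 c4 c5 c6 c7 c8 c9 c10 c11 c12 c13 c14 by blast
qed


end
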